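(* Let $\epsilon>0$ be a constant and let $\alpha\in(1/2,1)$ be a constant. Let $\mathbf C,\mathbf B$ be independent, uniformly random $m\times n$ matrices over $\mathbb{Z}_2$ with $\alpha n\le m\le n$. Then for sufficiently large $n$ there exists a constant $\delta>0$ such that $\Pr[\operatorname{rank}(\mathbf C^\intercal\mathbf B+\mathbf B^\intercal\mathbf C)\le(1-\epsilon)n]\le2^{-\delta n^2}$. *)

theory Defs
  imports "HOL-Library.Z2" "Jordan_Normal_Form.DL_Rank"
begin

text \<open>Rank of a matrix over GF(2) (type bit), as column rank in the Jordan_Normal_Form library.
  The argument r is the number of rows.\<close>
definition rank2 :: "nat \<Rightarrow> bit mat \<Rightarrow> nat" where
  "rank2 r A = vec_space.rank r (A :: bit mat)"

definition prob_low_rank :: "nat \<Rightarrow> nat \<Rightarrow> real \<Rightarrow> real" where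
  "prob_low_rank m n t =
     real (card {(C, B). C \<in> carrier_mat m n \<and> B \<in> carrier_mat m n \<and>
                 real (rank2 n (transpose_mat C * B + transpose_mat B * C)) \<le> t})
     / real (card (carrier_mat m n :: bit mat set)) ^ 2"

end

theory Submission imports Defs begin
declare add_bit_eq_xor[simp del] mult_bit_eq_and[simp del]

lemma bit_add_self[simp]: "(x::bit) + x = 0"
  by (cases x) simp_all
lemma bit_add_eq0_iff: "(a::bit) + b = 0 \<longleftrightarrow> a = b"
  by (cases a; cases b) simp_all
lemma bit_UNIV: "(UNIV :: bit set) = {0, 1}"
  by (auto intro: bit.exhaust)
lemma card_bit_UNIV: "card (UNIV :: bit set) = 2"
  unfolding bit_UNIV by simp
lemma finite_bit_UNIV[simp]: "finite (UNIV :: bit set)"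
  unfolding bit_UNIV by simp

definition Coef :: "nat set \<Rightarrow> (nat \<Rightarrow> bit) set" where
  "Coef T = {x. \<forall>i. i \<notin> T \<longrightarrow> x i = 0}"

lemma Coef_empty: "Coef {} = {\<lambda>_. 0}"
  unfolding Coef_def by auto

lemma Coef_insert:
  assumes "j \<notin> T"
  shows "Coef (insert j T) = Coef T \<union> (\<lambda>x. x(j:=1)) ` Coef T"
proof
  show "Coef (insert j T) \<subseteq> Coef T \<union> (\<lambda>x. x(j:=1)) ` Coef T"
  proof
    fix x assume x: "x \<in> Coef (insert j T)"
    show "x \<in> Coef T \<union> (\<lambda>x. x(j:=1)) ` Coef T"
    proof (cases "x j = 0")
      case True
      then have "x \<in> Coef T" using x unfolding Coef_def by auto
      then show ?thesis by blast
    next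
      case False
      then have "x = (x(j:=0))(j:=1)" by auto
      moreover have "x(j:=0) \<in> Coef T" using x unfolding Coef_def by auto
      ultimately show ?thesis by blast
    qed
  qed
  show "Coef T \<union> (\<lambda>x. x(j:=1)) ` Coef T \<subseteq> Coef (insert j T)"
    unfolding Coef_def by auto
qed

lemma Coef_finite_card:
  assumes "finite T"
  shows "finite (Coef T) \<and> card (Coef T) = 2 ^ card T"
  using assms
proof (induction T rule: finite_induct)
  case empty
  then show ?case by (simp add: Coef_empty)
next
  case (insert j T)
  have fin: "finite (Coef T)" and cT: "card (Coef T) = 2 ^ card T" using insert.IH by auto
  have inj: "inj_on (\<lambda>x. x(j:=1)) (Coef T)"
  proof (rule inj_onI)
    fix x y assume xy: "x \<in> Coef T" "y \<in> Coef T" "x(j:=1) = y(j:=1)"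
    show "x = y"
    proof
      fix i show "x i = y i"
      proof (cases "i = j")
        case True
        then show ?thesis using xy(1,2) insert(2) unfolding Coef_def by simp
      next
        case False
        then show ?thesis using fun_cong[OF xy(3), of i] by simp
      qed
    qed
  qed
  have disj: "Coef T \<inter> (\<lambda>x. x(j:=1)) ` Coef T = {}"
  proof (rule ccontr)
    assume "Coef T \<inter> (\<lambda>x. x(j:=1)) ` Coef T \<noteq> {}"
    then obtain y where "y \<in> Coef T" "y(j:=1) \<in> Coef T" by blast
    then have "(y(j:=1)) j = 0" using insert(2) unfolding Coef_def by blast
    then show False by simp
  qed
  have fin2: "finite ((\<lambda>x. x(j:=1)) ` Coef T)" using fin by blast
  have "card (Coef T \<union> (\<lambda>x. x(j:=1)) ` Coef T) = card (Coef T) + card ((\<lambda>x. x(j:=1)) ` Coef T)"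
    by (rule card_Un_disjoint[OF fin fin2 disj])
  also have "card ((\<lambda>x. x(j:=1)) ` Coef T) = card (Coef T)" by (rule card_image[OF inj])
  finally have c: "card (Coef T \<union> (\<lambda>x. x(j:=1)) ` Coef T) = 2 ^ card T + 2 ^ card T" unfolding cT .
  have "card (Coef (insert j T)) = 2 ^ card (insert j T)"
    unfolding Coef_insert[OF insert(2)] c using insert(1,2) by simp
  moreover have "finite (Coef (insert j T))" unfolding Coef_insert[OF insert(2)] using fin fin2 by blast
  ultimately show ?case by simp
qed

lemma finite_Coef[simp]: "finite T \<Longrightarrow> finite (Coef T)"
  using Coef_finite_card by blast
lemma card_Coef: "finite T \<Longrightarrow> card (Coef T) = 2 ^ card T"
  using Coef_finite_card by blast

lemma zero_Coef[simp]: "(\<lambda>_. 0) \<in> Coef T"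
  unfolding Coef_def by auto

definition Vsp :: "nat \<Rightarrow> (nat \<Rightarrow> bit) set" where
  "Vsp k = Coef {..<k}"

lemma card_Vsp: "card (Vsp k) = 2 ^ k" unfolding Vsp_def by (simp add: card_Coef)
lemma finite_Vsp[simp]: "finite (Vsp k)" unfolding Vsp_def by simp
lemma Vsp_iff: "v \<in> Vsp k \<longleftrightarrow> (\<forall>i\<ge>k. v i = 0)"
  unfolding Vsp_def Coef_def by (simp add: not_less)

definition vadd :: "(nat \<Rightarrow> bit) \<Rightarrow> (nat \<Rightarrow> bit) \<Rightarrow> nat \<Rightarrow> bit" where
  "vadd v w = (\<lambda>i. v i + w i)"

lemma vadd_cancel[simp]: "vadd v (vadd v w) = w"
  unfolding vadd_def by (simp add: add.assoc[symmetric])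

lemma vadd_Coef: "x \<in> Coef T \<Longrightarrow> y \<in> Coef T \<Longrightarrow> vadd x y \<in> Coef T"
  unfolding Coef_def vadd_def by simp
lemma vadd_Vsp: "x \<in> Vsp k \<Longrightarrow> y \<in> Vsp k \<Longrightarrow> vadd x y \<in> Vsp k"
  unfolding Vsp_def by (rule vadd_Coef)

definition om :: "nat \<Rightarrow> (nat \<Rightarrow> bit) \<Rightarrow> (nat \<Rightarrow> bit) \<Rightarrow> bit" where
  "om m v w = (\<Sum>l<m. v l * w (m+l) + v (m+l) * w l)"

lemma om_sym: "om m v w = om m w v"
  unfolding om_def by (intro sum.cong refl) (simp add: mult.commute add.commute)

lemma om_self[simp]: "om m v v = 0"
  unfolding om_def by (simp add: mult.commute)

lemma om_add_left: "om m (vadd v v') w = om m v w + om m v' w"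
proof -
  have "\<And>l. (v l + v' l) * w (m+l) + (v (m+l) + v' (m+l)) * w l =
      (v l * w (m+l) + v (m+l) * w l) + (v' l * w (m+l) + v' (m+l) * w l)"
    by (simp only: distrib_right add_ac)
  then show ?thesis unfolding om_def vadd_def by (simp only: sum.distrib[symmetric])
qed

lemma om_add_right: "om m w (vadd v v') = om m w v + om m w v'"
  using om_add_left om_sym by metis

lemma om_zero_left[simp]: "om m (\<lambda>_. 0) w = 0"
  unfolding om_def by simp

lemma om_lc_left:
  assumes "finite T"
  shows "om m (\<lambda>l. \<Sum>i\<in>T. x i * u i l) w = (\<Sum>i\<in>T. x i * om m (u i) w)"
proof -
  have "om m (\<lambda>l. \<Sum>i\<in>T. x i * u i l) w =
     (\<Sum>l<m. \<Sum>i\<in>T. x i * (u i l * w (m+l) + u i (m+l) * w l))"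
    unfolding om_def
    by (intro sum.cong refl) (simp only: sum_distrib_right distrib_left sum.distrib mult.assoc)
  also have "\<dots> = (\<Sum>i\<in>T. \<Sum>l<m. x i * (u i l * w (m+l) + u i (m+l) * w l))"
    by (rule sum.swap)
  also have "\<dots> = (\<Sum>i\<in>T. x i * om m (u i) w)"
    unfolding om_def by (simp only: sum_distrib_left)
  finally show ?thesis .
qed

lemma om_nondeg:
  assumes "v \<in> Vsp (2*m)" "v \<noteq> (\<lambda>_. 0)"
  shows "\<exists>w\<in>Vsp (2*m). om m v w = 1"
proof -
  have "\<exists>i. v i \<noteq> 0"
  proof (rule ccontr)
    assume "\<not> (\<exists>i. v i \<noteq> 0)"
    then have "v = (\<lambda>_. 0)" by (intro ext) blast
    then show False using assms(2) by blast
  qed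
  then obtain i where i: "v i \<noteq> 0" by blast
  then have "i < 2*m" using assms(1) unfolding Vsp_iff by (meson not_le)
  show ?thesis
  proof (cases "i < m")
    case True
    define w where "w = (\<lambda>k. if k = m + i then 1 else (0::bit))"
    have "w \<in> Vsp (2*m)" unfolding Vsp_iff w_def using True by auto
    moreover have "om m v w = v i"
      unfolding om_def w_def using True
      by (simp add: if_distrib[of "\<lambda>y. v _ * y"] sum.delta cong: if_cong)
    ultimately show ?thesis using i by auto
  next
    case False
    define w where "w = (\<lambda>k. if k = i - m then 1 else (0::bit))"
    have "w \<in> Vsp (2*m)" unfolding Vsp_iff w_def using False \<open>i < 2*m\<close> by auto
    moreover have "om m v w = v i"
    proof -
      have "om m v w = (\<Sum>l<m. if l = i - m then v (m+l) else 0)"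
        unfolding om_def w_def using False \<open>i < 2*m\<close> by (intro sum.cong) auto
      also have "\<dots> = v i" using False \<open>i < 2*m\<close> by (simp add: sum.delta)
      finally show ?thesis .
    qed
    ultimately show ?thesis using i by auto
  qed
qed


definition sg :: "bit \<Rightarrow> int" where "sg b = (if b = 0 then 1 else -1)"

lemma sg_add1: "sg (b + 1) = - sg b"
  by (cases b) (simp_all add: sg_def)

lemma balanced:
  assumes "finite A" "bij_betw g A A" "\<And>x. x \<in> A \<Longrightarrow> f (g x) = f x + 1"
  shows "(\<Sum>x\<in>A. sg (f x)) = 0"
proof -
  have "(\<Sum>x\<in>A. sg (f x)) = (\<Sum>x\<in>A. sg (f (g x)))"
    using sum.reindex_bij_betw[OF assms(2), of "\<lambda>x. sg (f x)"] by simp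
  also have "\<dots> = (\<Sum>x\<in>A. - sg (f x))" using assms(3) by (simp add: sg_add1)
  also have "\<dots> = - (\<Sum>x\<in>A. sg (f x))" by (simp add: sum_negf)
  finally show ?thesis by simp
qed

definition perp :: "nat \<Rightarrow> (nat \<Rightarrow> bit) set \<Rightarrow> (nat \<Rightarrow> bit) set" where
  "perp m U = {w \<in> Vsp (2*m). \<forall>u\<in>U. om m u w = 0}"

lemma bij_vadd:
  assumes "x0 \<in> A" "\<And>x y. x \<in> A \<Longrightarrow> y \<in> A \<Longrightarrow> vadd x y \<in> A"
  shows "bij_betw (vadd x0) A A"
  by (rule bij_betw_byWitness[where f'="vadd x0"]) (use assms in auto)

lemma card_perp:
  assumes U: "U \<subseteq> Vsp (2*m)" "(\<lambda>_. 0) \<in> U" "\<And>u u'. u \<in> U \<Longrightarrow> u' \<in> U \<Longrightarrow> vadd u u' \<in> U"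
  shows "card U * card (perp m U) = 2 ^ (2*m)"
proof -
  have finU: "finite U" using U(1) finite_Vsp by (rule finite_subset)
  let ?V = "Vsp (2*m)"
  have inner1: "(\<Sum>u\<in>U. sg (om m u w)) = (if w \<in> perp m U then int (card U) else 0)"
    if w: "w \<in> ?V" for w
  proof (cases "w \<in> perp m U")
    case True
    then have "\<forall>u\<in>U. om m u w = 0" unfolding perp_def by blast
    then have "(\<Sum>u\<in>U. sg (om m u w)) = (\<Sum>u\<in>U. 1)" by (simp add: sg_def)
    then show ?thesis using True by simp
  next
    case False
    then obtain u0 where u0: "u0 \<in> U" "om m u0 w \<noteq> 0" using w unfolding perp_def by blast
    then have u01: "om m u0 w = 1" by simp
    have "(\<Sum>u\<in>U. sg (om m u w)) = 0"
    proof (rule balanced[OF finU bij_vadd[OF u0(1) U(3)]])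
      fix x assume "x \<in> U"
      show "om m (vadd u0 x) w = om m x w + 1" using u01 by (simp add: om_add_left add.commute)
    qed
    then show ?thesis using False by simp
  qed
  have inner2: "(\<Sum>w\<in>?V. sg (om m u w)) = (if u = (\<lambda>_. 0) then 2^(2*m) else 0)"
    if u: "u \<in> U" for u
  proof (cases "u = (\<lambda>_. 0)")
    case True
    then show ?thesis by (simp add: sg_def card_Vsp)
  next
    case False
    have "u \<in> ?V" using u U(1) by blast
    then obtain w0 where w0: "w0 \<in> ?V" "om m u w0 = 1" using om_nondeg False by blast
    have "(\<Sum>w\<in>?V. sg (om m u w)) = 0"
    proof (rule balanced[OF finite_Vsp bij_vadd[OF w0(1) vadd_Vsp]])
      fix x assume "x \<in> ?V"
      show "om m u (vadd w0 x) = om m u x + 1" using w0(2) by (simp add: om_add_right add.commute)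
    qed
    then show ?thesis using False by simp
  qed
  have "(\<Sum>w\<in>?V. \<Sum>u\<in>U. sg (om m u w)) = (\<Sum>u\<in>U. \<Sum>w\<in>?V. sg (om m u w))"
    by (rule sum.swap)
  also have "\<dots> = (\<Sum>u\<in>U. if u = (\<lambda>_. 0) then 2^(2*m) else 0)"
    using inner2 by (intro sum.cong refl) simp
  also have "\<dots> = 2^(2*m)" using U(2) finU by (simp add: sum.delta)
  finally have A: "(\<Sum>w\<in>?V. \<Sum>u\<in>U. sg (om m u w)) = 2^(2*m)" .
  have "(\<Sum>w\<in>?V. \<Sum>u\<in>U. sg (om m u w)) = (\<Sum>w\<in>?V. if w \<in> perp m U then int (card U) else 0)"
    using inner1 by (intro sum.cong refl) simp
  also have "\<dots> = (\<Sum>w\<in>{w \<in> ?V. w \<in> perp m U}. int (card U))"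
    by (rule sum.inter_filter[symmetric]) simp
  also have "{w \<in> ?V. w \<in> perp m U} = perp m U" unfolding perp_def by blast
  finally have B: "(\<Sum>w\<in>?V. \<Sum>u\<in>U. sg (om m u w)) = int (card U) * int (card (perp m U))"
    by simp
  from A B have "int (card U * card (perp m U)) = int (2^(2*m))" by simp
  then show ?thesis by (simp only: of_nat_eq_iff)
qed


definition lc :: "nat set \<Rightarrow> (nat \<Rightarrow> bit) \<Rightarrow> (nat \<Rightarrow> nat \<Rightarrow> bit) \<Rightarrow> nat \<Rightarrow> bit" where
  "lc T x u = (\<lambda>l. \<Sum>i\<in>T. x i * u i l)"
definition spn :: "nat set \<Rightarrow> (nat \<Rightarrow> nat \<Rightarrow> bit) \<Rightarrow> (nat \<Rightarrow> bit) set" where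
  "spn T u = (\<lambda>x. lc T x u) ` Coef T"
definition fib :: "nat set \<Rightarrow> (nat \<Rightarrow> nat \<Rightarrow> bit) \<Rightarrow> (nat \<Rightarrow> bit) \<Rightarrow> (nat \<Rightarrow> bit) set" where
  "fib T u v = {x \<in> Coef T. lc T x u = v}"
definition Zk :: "nat set \<Rightarrow> (nat \<Rightarrow> nat \<Rightarrow> bit) \<Rightarrow> nat" where
  "Zk T u = card (fib T u (\<lambda>_. 0))"
definition PerpT :: "nat \<Rightarrow> nat set \<Rightarrow> (nat \<Rightarrow> nat \<Rightarrow> bit) \<Rightarrow> (nat \<Rightarrow> bit) set" where
  "PerpT m T u = {w \<in> Vsp (2*m). \<forall>i\<in>T. om m (u i) w = 0}"

lemma lc_add: "lc T (vadd x y) u = vadd (lc T x u) (lc T y u)"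
  unfolding lc_def vadd_def by (simp only: distrib_right sum.distrib)

lemma lc_zero: "lc T (\<lambda>_. 0) u = (\<lambda>_. 0)"
  unfolding lc_def by simp

lemma vadd_self: "vadd v v = (\<lambda>_. 0)"
  unfolding vadd_def by simp

lemma finite_fib[simp]: "finite T \<Longrightarrow> finite (fib T u v)"
  unfolding fib_def by simp

lemma fib_le:
  assumes "finite T"
  shows "card (fib T u v) \<le> Zk T u"
proof (cases "fib T u v = {}")
  case True
  then show ?thesis by simp
next
  case False
  then obtain x0 where x0: "x0 \<in> fib T u v" by blast
  have inj: "inj_on (vadd x0) (fib T u v)"
    by (rule inj_onI) (metis vadd_cancel)
  have sub: "vadd x0 ` fib T u v \<subseteq> fib T u (\<lambda>_. 0)"
  proof
    fix y assume "y \<in> vadd x0 ` fib T u v"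
    then obtain x where x: "x \<in> fib T u v" "y = vadd x0 x" by blast
    have "y \<in> Coef T" using x x0 unfolding fib_def by (simp add: vadd_Coef)
    moreover have "lc T y u = (\<lambda>_. 0)" using x x0 unfolding fib_def by (simp add: lc_add vadd_self)
    ultimately show "y \<in> fib T u (\<lambda>_. 0)" unfolding fib_def by blast
  qed
  show ?thesis unfolding Zk_def
    using card_inj_on_le[OF inj sub finite_fib[OF assms]] .
qed

lemma Zk_pos: "finite T \<Longrightarrow> Zk T u \<ge> 1"
proof -
  assume "finite T"
  have "(\<lambda>_. 0) \<in> fib T u (\<lambda>_. 0)" unfolding fib_def by (simp add: lc_zero)
  then have "fib T u (\<lambda>_. 0) \<noteq> {}" by blast
  then show ?thesis unfolding Zk_def using finite_fib[OF \<open>finite T\<close>]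
    by (simp add: Suc_le_eq card_gt_0_iff)
qed

lemma card_spn_le: "finite T \<Longrightarrow> card (spn T u) \<le> 2 ^ card T"
  unfolding spn_def by (metis card_Coef card_image_le finite_Coef)

lemma finite_spn[simp]: "finite T \<Longrightarrow> finite (spn T u)"
  unfolding spn_def by simp

lemma card_spn_Z:
  assumes "finite T"
  shows "2 ^ card T \<le> card (spn T u) * Zk T u"
proof -
  have "Coef T \<subseteq> (\<Union>v\<in>spn T u. fib T u v)"
    unfolding spn_def fib_def by blast
  then have "card (Coef T) \<le> card (\<Union>v\<in>spn T u. fib T u v)"
    by (rule card_mono[rotated]) (simp add: assms)
  also have "\<dots> \<le> (\<Sum>v\<in>spn T u. card (fib T u v))"
    by (rule card_UN_le) (simp add: assms)
  also have "\<dots> \<le> (\<Sum>v\<in>spn T u. Zk T u)"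
    by (rule sum_mono) (rule fib_le[OF assms])
  also have "\<dots> = card (spn T u) * Zk T u" by simp
  finally show ?thesis using card_Coef[OF assms] by simp
qed

lemma lc_Vsp:
  assumes "\<forall>i\<in>T. u i \<in> Vsp (2*m)"
  shows "lc T x u \<in> Vsp (2*m)"
  unfolding Vsp_iff lc_def using assms unfolding Vsp_iff by simp

lemma lc_delta:
  assumes "finite T" "i \<in> T"
  shows "lc T (\<lambda>k. if k = i then 1 else 0) u = u i"
  unfolding lc_def using assms by (simp add: if_distrib[of "\<lambda>y. y * _"] sum.delta cong: if_cong)

lemma PerpT_eq:
  assumes "finite T"
  shows "PerpT m T u = perp m (spn T u)"
proof
  show "PerpT m T u \<subseteq> perp m (spn T u)"
  proof
    fix w assume w: "w \<in> PerpT m T u"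
    have "om m v w = 0" if "v \<in> spn T u" for v
    proof -
      obtain x where "v = lc T x u" using \<open>v \<in> spn T u\<close> unfolding spn_def by blast
      then have "om m v w = (\<Sum>i\<in>T. x i * om m (u i) w)"
        unfolding lc_def using om_lc_left[OF assms] by simp
      also have "\<dots> = 0" using w unfolding PerpT_def by simp
      finally show ?thesis .
    qed
    then show "w \<in> perp m (spn T u)" using w unfolding PerpT_def perp_def by blast
  qed
  show "perp m (spn T u) \<subseteq> PerpT m T u"
  proof
    fix w assume w: "w \<in> perp m (spn T u)"
    have "om m (u i) w = 0" if "i \<in> T" for i
    proof -
      have "(\<lambda>k. if k = i then 1 else (0::bit)) \<in> Coef T" unfolding Coef_def using that by simp
      then have "lc T (\<lambda>k. if k = i then 1 else 0) u \<in> spn T u" unfolding spn_def by blast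
      then have "u i \<in> spn T u" using lc_delta[OF assms that] by simp
      then show ?thesis using w unfolding perp_def by blast
    qed
    then show "w \<in> PerpT m T u" using w unfolding PerpT_def perp_def by blast
  qed
qed

lemma K_bound:
  assumes "finite T" "\<forall>i\<in>T. u i \<in> Vsp (2*m)"
  shows "card (PerpT m T u) * 2 ^ card T \<le> 2 ^ (2*m) * Zk T u"
proof -
  have cp: "card (spn T u) * card (perp m (spn T u)) = 2 ^ (2*m)"
  proof (rule card_perp)
    show "spn T u \<subseteq> Vsp (2*m)" unfolding spn_def using lc_Vsp[OF assms(2)] by blast
    show "(\<lambda>_. 0) \<in> spn T u" unfolding spn_def using lc_zero zero_Coef by (metis image_eqI)
    fix a b assume "a \<in> spn T u" "b \<in> spn T u"
    then obtain x y where "x \<in> Coef T" "y \<in> Coef T" "a = lc T x u" "b = lc T y u"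
      unfolding spn_def by blast
    then show "vadd a b \<in> spn T u" unfolding spn_def
      using lc_add vadd_Coef by (metis image_eqI)
  qed
  have "card (PerpT m T u) * 2 ^ card T \<le> card (PerpT m T u) * (card (spn T u) * Zk T u)"
    using card_spn_Z[OF assms(1)] by simp
  also have "\<dots> = (card (spn T u) * card (perp m (spn T u))) * Zk T u"
    unfolding PerpT_eq[OF assms(1)] by (simp only: ac_simps)
  also have "\<dots> = 2 ^ (2*m) * Zk T u" using cp by simp
  finally show ?thesis .
qed


definition Tup :: "nat \<Rightarrow> nat set \<Rightarrow> (nat \<Rightarrow> nat \<Rightarrow> bit) set" where
  "Tup m T = {u. (\<forall>i\<in>T. u i \<in> Vsp (2*m)) \<and> (\<forall>i. i \<notin> T \<longrightarrow> u i = (\<lambda>_. 0))}"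
definition Iso :: "nat \<Rightarrow> nat set \<Rightarrow> (nat \<Rightarrow> nat \<Rightarrow> bit) set" where
  "Iso m T = {u \<in> Tup m T. \<forall>i\<in>T. \<forall>i'\<in>T. om m (u i) (u i') = 0}"
definition W :: "nat \<Rightarrow> nat set \<Rightarrow> nat \<Rightarrow> real" where
  "W m T p = (\<Sum>u\<in>Iso m T. real (Zk T u) ^ p)"

lemma finite_Tup:
  assumes "finite T"
  shows "finite (Tup m T)"
proof -
  have "Tup m T \<subseteq> (\<lambda>f i. if i \<in> T then f i else (\<lambda>_. 0)) ` PiE T (\<lambda>_. Vsp (2*m))"
  proof
    fix u assume u: "u \<in> Tup m T"
    have "restrict u T \<in> PiE T (\<lambda>_. Vsp (2*m))" using u unfolding Tup_def by simp
    moreover have "u = (\<lambda>i. if i \<in> T then restrict u T i else (\<lambda>_. 0))"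
      using u unfolding Tup_def by (intro ext) simp
    ultimately show "u \<in> (\<lambda>f i. if i \<in> T then f i else (\<lambda>_. 0)) ` PiE T (\<lambda>_. Vsp (2*m))"
      by blast
  qed
  moreover have "finite (PiE T (\<lambda>_. Vsp (2*m)))" using assms by (simp add: finite_PiE)
  ultimately show ?thesis using finite_subset by blast
qed

lemma finite_Iso: "finite T \<Longrightarrow> finite (Iso m T)"
  unfolding Iso_def using finite_Tup by simp

lemma Iso_empty: "Iso m {} = {\<lambda>_. \<lambda>_. 0}"
  unfolding Iso_def Tup_def by auto

lemma Zk_empty: "Zk {} u = 1"
proof -
  have "fib {} u (\<lambda>_. 0) = {\<lambda>_. 0}"
    unfolding fib_def lc_def Coef_empty by auto
  then show ?thesis unfolding Zk_def by simp
qed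

lemma W_empty: "W m {} p = 1"
  unfolding W_def Iso_empty Zk_empty by simp

lemma Iso_insert:
  assumes "j \<notin> T"
  shows "Iso m (insert j T) = (\<lambda>(u,v). u(j:=v)) ` (SIGMA u:Iso m T. PerpT m T u)"
proof
  show "Iso m (insert j T) \<subseteq> (\<lambda>(u,v). u(j:=v)) ` (SIGMA u:Iso m T. PerpT m T u)"
  proof
    fix w assume w: "w \<in> Iso m (insert j T)"
    define u where "u = w(j := (\<lambda>_. 0))"
    have uT: "u \<in> Iso m T"
      using w assms unfolding Iso_def Tup_def u_def by auto
    have "w j \<in> PerpT m T u"
      using w assms unfolding Iso_def Tup_def PerpT_def u_def by auto
    moreover have "w = u(j := w j)" unfolding u_def by simp
    ultimately show "w \<in> (\<lambda>(u,v). u(j:=v)) ` (SIGMA u:Iso m T. PerpT m T u)"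
      using uT by (intro image_eqI[where x="(u, w j)"]) auto
  qed
  show "(\<lambda>(u,v). u(j:=v)) ` (SIGMA u:Iso m T. PerpT m T u) \<subseteq> Iso m (insert j T)"
  proof
    fix w assume "w \<in> (\<lambda>(u,v). u(j:=v)) ` (SIGMA u:Iso m T. PerpT m T u)"
    then obtain u v where uv: "u \<in> Iso m T" "v \<in> PerpT m T u" "w = u(j:=v)" by force
    have tup: "w \<in> Tup m (insert j T)"
      using uv assms unfolding Iso_def Tup_def PerpT_def by auto
    have "om m (w i) (w i') = 0" if ii: "i \<in> insert j T" "i' \<in> insert j T" for i i'
    proof -
      consider "i = j" "i' = j" | "i = j" "i' \<in> T" | "i \<in> T" "i' = j" | "i \<in> T" "i' \<in> T" "i \<noteq> j" "i' \<noteq> j"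
        using ii assms by blast
      then show ?thesis
      proof cases
        case 1 then show ?thesis by simp
      next
        case 2
        then have "om m (u i') v = 0" using uv unfolding PerpT_def by blast
        then show ?thesis using 2 assms uv(3) by (simp add: om_sym)
      next
        case 3
        then have "om m (u i) v = 0" using uv unfolding PerpT_def by blast
        then show ?thesis using 3 assms uv(3) by simp
      next
        case 4
        then show ?thesis using uv unfolding Iso_def by simp
      qed
    qed
    then show "w \<in> Iso m (insert j T)" using tup unfolding Iso_def by blast
  qed
qed

lemma inj_upd:
  assumes "j \<notin> T"
  shows "inj_on (\<lambda>(u,v). u(j:=v)) (SIGMA u:Iso m T. PerpT m T u)"
proof (rule inj_onI)
  fix a b assume a: "a \<in> (SIGMA u:Iso m T. PerpT m T u)" and b: "b \<in> (SIGMA u:Iso m T. PerpT m T u)"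
    and eq: "(\<lambda>(u,v). u(j:=v)) a = (\<lambda>(u,v). u(j:=v)) b"
  obtain u v where auv: "a = (u,v)" by (cases a)
  obtain u' v' where buv: "b = (u',v')" by (cases b)
  have e: "u(j:=v) = u'(j:=v')" using eq auv buv by simp
  have uj: "u j = (\<lambda>_. 0)" "u' j = (\<lambda>_. 0)" using a b auv buv assms unfolding Iso_def Tup_def by auto
  have "v = v'" using fun_cong[OF e, of j] by simp
  moreover have "u = u'"
  proof
    fix i show "u i = u' i"
      using fun_cong[OF e, of i] uj by (cases "i = j") auto
  qed
  ultimately show "a = b" using auv buv by simp
qed

lemma fib_empty: "v \<notin> spn T u \<Longrightarrow> fib T u v = {}"
  unfolding fib_def spn_def by blast

lemma Zk_insert:
  assumes "finite T" "j \<notin> T"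
  shows "Zk (insert j T) (u(j:=v)) \<le> Zk T u + card (fib T u v)"
proof -
  have sub: "fib (insert j T) (u(j:=v)) (\<lambda>_. 0) \<subseteq> fib T u (\<lambda>_. 0) \<union> (\<lambda>x. x(j:=1)) ` fib T u v"
  proof
    fix x assume x: "x \<in> fib (insert j T) (u(j:=v)) (\<lambda>_. 0)"
    have xC: "x \<in> Coef (insert j T)" using x unfolding fib_def by blast
    have lc0: "lc (insert j T) x (u(j:=v)) = (\<lambda>_. 0)" using x unfolding fib_def by blast
    have lcT: "lc T y (u(j:=v)) = lc T y u" for y
      unfolding lc_def using assms(2) by (intro ext sum.cong refl) auto
    have lcI: "lc (insert j T) x (u(j:=v)) = vadd (\<lambda>l. x j * v l) (lc T x u)"
      unfolding vadd_def using lcT[of x] assms unfolding lc_def by (intro ext) (simp add: fun_eq_iff)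
    show "x \<in> fib T u (\<lambda>_. 0) \<union> (\<lambda>x. x(j:=1)) ` fib T u v"
    proof (cases "x j = 0")
      case True
      have "x \<in> Coef T" using xC True unfolding Coef_def by auto
      moreover have "lc T x u = (\<lambda>_. 0)" using lc0 lcI True unfolding vadd_def by simp
      ultimately show ?thesis unfolding fib_def by blast
    next
      case False
      then have xj: "x j = 1" by simp
      define y where "y = x(j:=0)"
      have yC: "y \<in> Coef T" using xC unfolding Coef_def y_def by auto
      have lcy: "lc T y u = lc T x u"
        unfolding lc_def y_def using assms(2) by (intro ext sum.cong refl) auto
      have "vadd v (lc T x u) = (\<lambda>_. 0)" using lc0 lcI xj by simp
      then have "lc T x u = v" unfolding vadd_def fun_eq_iff by (simp add: bit_add_eq0_iff)
      then have "y \<in> fib T u v" using yC lcy unfolding fib_def by simp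
      moreover have "x = y(j:=1)" unfolding y_def using xj by (intro ext) simp
      ultimately show ?thesis by blast
    qed
  qed
  have "Zk (insert j T) (u(j:=v)) \<le> card (fib T u (\<lambda>_. 0) \<union> (\<lambda>x. x(j:=1)) ` fib T u v)"
    unfolding Zk_def by (rule card_mono[OF _ sub]) (simp add: assms(1))
  also have "\<dots> \<le> card (fib T u (\<lambda>_. 0)) + card ((\<lambda>x. x(j:=1)) ` fib T u v)"
    by (rule card_Un_le)
  also have "\<dots> \<le> Zk T u + card (fib T u v)"
    unfolding Zk_def by (simp add: card_image_le assms(1))
  finally show ?thesis .
qed


lemma Iso_Vsp: "u \<in> Iso m T \<Longrightarrow> \<forall>i\<in>T. u i \<in> Vsp (2*m)"
  unfolding Iso_def Tup_def by blast

lemma finite_PerpT[simp]: "finite (PerpT m T u)"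
  unfolding PerpT_def by simp

lemma inner_step:
  assumes "finite T" "j \<notin> T" "p + 2 * card T \<le> 2*m" "u \<in> Iso m T"
  shows "(\<Sum>v\<in>PerpT m T u. real (Zk (insert j T) (u(j:=v))) ^ p)
          \<le> 2 * 2^(2*m - card T) * real (Zk T u) ^ (p+1)"
proof -
  let ?d = "card T"
  let ?Z = "real (Zk T u)"
  let ?K = "real (card (PerpT m T u))"
  let ?S = "spn T u"
  have Z1: "?Z \<ge> 1" using Zk_pos[OF assms(1)] by simp
  have pt: "real (Zk (insert j T) (u(j:=v))) ^ p \<le> ?Z ^ p + (if v \<in> ?S then (2 * ?Z) ^ p else 0)" for v
  proof -
    have a: "real (Zk (insert j T) (u(j:=v))) \<le> ?Z + real (card (fib T u v))"
      using Zk_insert[OF assms(1,2), of u v] by simp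
    show ?thesis
    proof (cases "v \<in> ?S")
      case True
      have "real (card (fib T u v)) \<le> ?Z" using fib_le[OF assms(1)] by simp
      then have "real (Zk (insert j T) (u(j:=v))) \<le> 2 * ?Z" using a by simp
      then have "real (Zk (insert j T) (u(j:=v))) ^ p \<le> (2 * ?Z) ^ p"
        by (rule power_mono) simp
      moreover have "0 \<le> ?Z ^ p" by simp
      ultimately have "real (Zk (insert j T) (u(j:=v))) ^ p \<le> ?Z ^ p + (2 * ?Z) ^ p" by linarith
      then show ?thesis using True by simp
    next
      case False
      then have "real (Zk (insert j T) (u(j:=v))) \<le> ?Z" using a fib_empty by simp
      then have "real (Zk (insert j T) (u(j:=v))) ^ p \<le> ?Z ^ p"
        by (rule power_mono) simp
      then show ?thesis using False by simp
    qed
  qed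
  have sp: "(\<Sum>v\<in>PerpT m T u. if v \<in> ?S then (2 * ?Z) ^ p else 0) \<le> real (card ?S) * (2 * ?Z) ^ p"
  proof -
    have "(\<Sum>v\<in>PerpT m T u. if v \<in> ?S then (2 * ?Z) ^ p else 0)
      = (\<Sum>v\<in>{v \<in> PerpT m T u. v \<in> ?S}. (2 * ?Z) ^ p)"
      by (rule sum.inter_filter[symmetric]) simp
    also have "\<dots> = real (card {v \<in> PerpT m T u. v \<in> ?S}) * (2 * ?Z) ^ p" by simp
    also have "\<dots> \<le> real (card ?S) * (2 * ?Z) ^ p"
    proof -
      have "card {v \<in> PerpT m T u. v \<in> ?S} \<le> card ?S"
        by (rule card_mono) (auto simp: assms(1))
      then show ?thesis by (intro mult_right_mono) auto
    qed
    finally show ?thesis .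
  qed
  have "(\<Sum>v\<in>PerpT m T u. real (Zk (insert j T) (u(j:=v))) ^ p)
      \<le> (\<Sum>v\<in>PerpT m T u. ?Z ^ p + (if v \<in> ?S then (2 * ?Z) ^ p else 0))"
    by (rule sum_mono) (rule pt)
  also have "\<dots> = ?K * ?Z ^ p + (\<Sum>v\<in>PerpT m T u. if v \<in> ?S then (2 * ?Z) ^ p else 0)"
    by (simp add: sum.distrib)
  finally have s1: "(\<Sum>v\<in>PerpT m T u. real (Zk (insert j T) (u(j:=v))) ^ p)
      \<le> ?K * ?Z ^ p + real (card ?S) * (2 * ?Z) ^ p" using sp by linarith
  have dm: "?d \<le> 2*m" "?d + p \<le> 2*m - ?d" using assms(3) by auto
  have Kb: "?K * 2 ^ ?d \<le> 2 ^ (2*m) * ?Z"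
  proof -
    have "card (PerpT m T u) * 2 ^ ?d \<le> 2 ^ (2*m) * Zk T u"
      using K_bound[OF assms(1) Iso_Vsp[OF assms(4)]] .
    then have "real (card (PerpT m T u) * 2 ^ ?d) \<le> real (2 ^ (2*m) * Zk T u)"
      by (simp only: of_nat_le_iff)
    then show ?thesis by simp
  qed
  have p2: "(2::real) ^ (2*m) = 2 ^ (2*m - ?d) * 2 ^ ?d"
    using dm(1) by (simp add: power_add[symmetric])
  have Kb2: "?K \<le> 2 ^ (2*m - ?d) * ?Z"
  proof -
    have "?K * 2 ^ ?d \<le> (2 ^ (2*m - ?d) * ?Z) * 2 ^ ?d" using Kb p2 by (simp add: ac_simps)
    then show ?thesis by simp
  qed
  have t1: "?K * ?Z ^ p \<le> 2 ^ (2*m - ?d) * ?Z ^ (p+1)"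
  proof -
    have "?K * ?Z ^ p \<le> (2 ^ (2*m - ?d) * ?Z) * ?Z ^ p"
      by (rule mult_right_mono[OF Kb2]) simp
    then show ?thesis by (simp add: ac_simps)
  qed
  have t2: "real (card ?S) * (2 * ?Z) ^ p \<le> 2 ^ (2*m - ?d) * ?Z ^ (p+1)"
  proof -
    have cs: "real (card ?S) \<le> 2 ^ ?d" using card_spn_le[OF assms(1), of u]
      by (metis of_nat_le_iff of_nat_numeral of_nat_power)
    have "real (card ?S) * (2 * ?Z) ^ p \<le> 2 ^ ?d * (2 ^ p * ?Z ^ p)"
      by (rule mult_mono) (use cs in \<open>auto simp: power_mult_distrib\<close>)
    also have "\<dots> = 2 ^ (?d + p) * ?Z ^ p" by (simp add: power_add)
    also have "\<dots> \<le> 2 ^ (2*m - ?d) * ?Z ^ (p+1)"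
    proof (rule mult_mono)
      show "(2::real) ^ (?d + p) \<le> 2 ^ (2*m - ?d)" by (rule power_increasing) (use dm in auto)
      show "?Z ^ p \<le> ?Z ^ (p+1)" by (rule power_increasing) (use Z1 in auto)
    qed auto
    finally show ?thesis .
  qed
  show ?thesis using s1 t1 t2 by simp
qed

lemma W_step:
  assumes "finite T" "j \<notin> T" "p + 2 * card T \<le> 2*m"
  shows "W m (insert j T) p \<le> 2 * 2^(2*m - card T) * W m T (p+1)"
proof -
  have "W m (insert j T) p = (\<Sum>x\<in>(SIGMA u:Iso m T. PerpT m T u).
          real (Zk (insert j T) ((\<lambda>(u,v). u(j:=v)) x)) ^ p)"
    unfolding W_def Iso_insert[OF assms(2)] by (rule sum.reindex[OF inj_upd[OF assms(2)], unfolded comp_def])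
  also have "\<dots> = (\<Sum>u\<in>Iso m T. \<Sum>v\<in>PerpT m T u. real (Zk (insert j T) (u(j:=v))) ^ p)"
  proof -
    have "(\<Sum>u\<in>Iso m T. \<Sum>v\<in>PerpT m T u. real (Zk (insert j T) (u(j:=v))) ^ p)
      = (\<Sum>x\<in>(SIGMA u:Iso m T. PerpT m T u). (\<lambda>u v. real (Zk (insert j T) (u(j:=v))) ^ p) (fst x) (snd x))"
      using sum.Sigma[of "Iso m T" "PerpT m T" "\<lambda>u v. real (Zk (insert j T) (u(j:=v))) ^ p"]
      by (simp add: finite_Iso assms(1) case_prod_beta)
    then show ?thesis by (simp add: case_prod_beta)
  qed
  also have "\<dots> \<le> (\<Sum>u\<in>Iso m T. 2 * 2^(2*m - card T) * real (Zk T u) ^ (p+1))"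
    by (rule sum_mono) (rule inner_step[OF assms])
  also have "\<dots> = 2 * 2^(2*m - card T) * W m T (p+1)"
    unfolding W_def by (simp add: sum_distrib_left)
  finally show ?thesis .
qed

lemma W_bound:
  assumes "finite T"
  shows "p + 2 * card T \<le> 2*m \<Longrightarrow>
    W m T p \<le> 2 powr (real ((2*m+1) * card T) - real (card T) * (real (card T) - 1) / 2)"
  using assms
proof (induction T arbitrary: p rule: finite_induct)
  case empty
  then show ?case by (simp add: W_empty)
next
  case (insert j T)
  let ?d = "card T"
  have cI: "card (insert j T) = Suc ?d" using insert(1,2) by simp
  have c1: "p + 2 * ?d \<le> 2*m" using insert(4) cI by simp
  have c2: "(p+1) + 2 * ?d \<le> 2*m" using insert(4) cI by simp
  have "W m (insert j T) p \<le> 2 * 2^(2*m - ?d) * W m T (p+1)"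
    by (rule W_step[OF insert(1,2) c1])
  also have "\<dots> \<le> 2 * 2^(2*m - ?d) * 2 powr (real ((2*m+1) * ?d) - real ?d * (real ?d - 1) / 2)"
    by (rule mult_left_mono[OF insert.IH[OF c2]]) simp
  also have "\<dots> = 2 powr (1 + real (2*m - ?d) + (real ((2*m+1) * ?d) - real ?d * (real ?d - 1) / 2))"
    by (simp add: powr_add powr_realpow[symmetric])
  also have "1 + real (2*m - ?d) + (real ((2*m+1) * ?d) - real ?d * (real ?d - 1) / 2)
      = real ((2*m+1) * card (insert j T)) - real (card (insert j T)) * (real (card (insert j T)) - 1) / 2"
  proof -
    have e: "real (2*m - ?d) = 2 * real m - real ?d" using c1 by (simp add: of_nat_diff)
    show ?thesis unfolding cI e by (simp add: field_simps)
  qed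
  finally show ?case .
qed


definition GoodTup :: "nat \<Rightarrow> nat \<Rightarrow> nat set \<Rightarrow> (nat \<Rightarrow> nat \<Rightarrow> bit) set" where
  "GoodTup m n T = {g \<in> Tup m {0..<n}. \<forall>j\<in>T. \<forall>k<n. om m (g k) (g j) = 0}"

lemma card_GoodTup:
  assumes T: "T \<subseteq> {0..<n}" and c: "(n - card T) + 2 * card T \<le> 2*m"
  shows "real (card (GoodTup m n T)) \<le> (2^(2*m) / 2^card T)^(n - card T) * W m T (n - card T)"
proof -
  define R where "R = {0..<n} - T"
  have finT: "finite T" using T by (rule finite_subset) simp
  have finR: "finite R" unfolding R_def by simp
  have cR: "card R = n - card T" unfolding R_def using T by (simp add: card_Diff_subset finT)
  let ?q = "n - card T"
  define mg where "mg = (\<lambda>(u::nat \<Rightarrow> nat \<Rightarrow> bit, w::nat \<Rightarrow> nat \<Rightarrow> bit) k. if k \<in> T then u k else if k \<in> R then w k else (\<lambda>_::nat. 0::bit))"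
  let ?Sg = "SIGMA u:Iso m T. PiE R (\<lambda>_. PerpT m T u)"
  have sub: "GoodTup m n T \<subseteq> mg ` ?Sg"
  proof
    fix g assume g: "g \<in> GoodTup m n T"
    have gT: "g \<in> Tup m {0..<n}" and go: "\<forall>j\<in>T. \<forall>k<n. om m (g k) (g j) = 0"
      using g unfolding GoodTup_def by auto
    define u where "u = (\<lambda>k. if k \<in> T then g k else (\<lambda>_. 0))"
    have uI: "u \<in> Iso m T"
    proof -
      have "u \<in> Tup m T" using gT T unfolding Tup_def u_def by auto
      moreover have "\<forall>i\<in>T. \<forall>i'\<in>T. om m (u i) (u i') = 0"
        using go T unfolding u_def by auto
      ultimately show ?thesis unfolding Iso_def by blast
    qed
    have wI: "restrict g R \<in> PiE R (\<lambda>_. PerpT m T u)"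
    proof -
      have "g k \<in> PerpT m T u" if "k \<in> R" for k
      proof -
        have kn: "k < n" "k \<notin> T" using that unfolding R_def by auto
        have "g k \<in> Vsp (2*m)" using gT kn unfolding Tup_def by auto
        moreover have "om m (u i) (g k) = 0" if "i \<in> T" for i
          using go kn that unfolding u_def by (simp add: om_sym)
        ultimately show ?thesis unfolding PerpT_def by blast
      qed
      then show ?thesis by simp
    qed
    have "g = mg (u, restrict g R)"
    proof
      fix k show "g k = mg (u, restrict g R) k"
        using gT unfolding mg_def u_def R_def Tup_def by auto
    qed
    then show "g \<in> mg ` ?Sg" using uI wI by blast
  qed
  have finSg: "finite ?Sg" using finite_Iso[OF finT] finR by (simp add: finite_PiE)
  have "card (GoodTup m n T) \<le> card (mg ` ?Sg)" by (rule card_mono[OF finite_imageI[OF finSg] sub])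
  also have "\<dots> \<le> card ?Sg" by (rule card_image_le[OF finSg])
  also have "\<dots> = (\<Sum>u\<in>Iso m T. card (PiE R (\<lambda>_. PerpT m T u)))"
    by (rule card_SigmaI) (simp_all add: finite_Iso finT finR finite_PiE)
  also have "\<dots> = (\<Sum>u\<in>Iso m T. card (PerpT m T u) ^ ?q)"
    by (intro sum.cong refl) (simp add: card_PiE finR cR)
  finally have A0: "card (GoodTup m n T) \<le> (\<Sum>u\<in>Iso m T. card (PerpT m T u) ^ ?q)" .
  then have "real (card (GoodTup m n T)) \<le> real (\<Sum>u\<in>Iso m T. card (PerpT m T u) ^ ?q)"
    by (simp only: of_nat_le_iff)
  then have A: "real (card (GoodTup m n T)) \<le> (\<Sum>u\<in>Iso m T. real (card (PerpT m T u)) ^ ?q)"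
    by simp
  have B: "real (card (PerpT m T u)) ^ ?q \<le> (2^(2*m) / 2^card T)^?q * real (Zk T u) ^ ?q"
    if u: "u \<in> Iso m T" for u
  proof -
    have "card (PerpT m T u) * 2 ^ card T \<le> 2 ^ (2*m) * Zk T u"
      using K_bound[OF finT Iso_Vsp[OF u]] .
    then have "real (card (PerpT m T u) * 2 ^ card T) \<le> real (2 ^ (2*m) * Zk T u)"
      by (simp only: of_nat_le_iff)
    then have "real (card (PerpT m T u)) * 2 ^ card T \<le> 2 ^ (2*m) * real (Zk T u)"
      by simp
    then have "real (card (PerpT m T u)) \<le> 2 ^ (2*m) / 2 ^ card T * real (Zk T u)"
      by (simp add: field_simps)
    then have "real (card (PerpT m T u)) ^ ?q \<le> (2 ^ (2*m) / 2 ^ card T * real (Zk T u)) ^ ?q"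
      by (rule power_mono) simp
    then show ?thesis by (simp only: power_mult_distrib)
  qed
  have "(\<Sum>u\<in>Iso m T. real (card (PerpT m T u)) ^ ?q) \<le> (\<Sum>u\<in>Iso m T. (2^(2*m) / 2^card T)^?q * real (Zk T u) ^ ?q)"
    by (rule sum_mono) (rule B)
  also have "\<dots> = (2^(2*m) / 2^card T)^?q * W m T ?q"
    unfolding W_def by (simp add: sum_distrib_left)
  finally show ?thesis using A by linarith
qed


lemma mult_entry:
  assumes "A \<in> carrier_mat p q" "B \<in> carrier_mat q r" "i < p" "j < r"
  shows "(A * B) $$ (i,j) = (\<Sum>l<q. A $$ (i,l) * B $$ (l,j))"
  using assms by (simp add: scalar_prod_def atLeast0LessThan)

definition Mx :: "bit mat \<Rightarrow> bit mat \<Rightarrow> bit mat" where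
  "Mx C B = transpose_mat C * B + transpose_mat B * C"

definition cv :: "nat \<Rightarrow> bit mat \<Rightarrow> bit mat \<Rightarrow> nat \<Rightarrow> nat \<Rightarrow> bit" where
  "cv m C B k = (\<lambda>l. if l < m then C $$ (l,k) else if l < 2*m then B $$ (l-m,k) else 0)"

definition tupm :: "nat \<Rightarrow> nat \<Rightarrow> bit mat \<Rightarrow> bit mat \<Rightarrow> nat \<Rightarrow> nat \<Rightarrow> bit" where
  "tupm m n C B = (\<lambda>k. if k < n then cv m C B k else (\<lambda>_. 0))"

lemma Mx_carrier: "C \<in> carrier_mat m n \<Longrightarrow> B \<in> carrier_mat m n \<Longrightarrow> Mx C B \<in> carrier_mat n n"
  unfolding Mx_def by auto

lemma Mx_entry:
  assumes C: "C \<in> carrier_mat m n" and B: "B \<in> carrier_mat m n" and k: "k < n" and j: "j < n"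
  shows "Mx C B $$ (k,j) = om m (cv m C B k) (cv m C B j)"
proof -
  have CT: "transpose_mat C \<in> carrier_mat n m" and BT: "transpose_mat B \<in> carrier_mat n m"
    using C B by auto
  have "Mx C B $$ (k,j) = (transpose_mat C * B) $$ (k,j) + (transpose_mat B * C) $$ (k,j)"
    unfolding Mx_def using C B k j by simp
  also have "\<dots> = (\<Sum>l<m. transpose_mat C $$ (k,l) * B $$ (l,j)) + (\<Sum>l<m. transpose_mat B $$ (k,l) * C $$ (l,j))"
    using mult_entry[OF CT B k j] mult_entry[OF BT C k j] by simp
  also have "\<dots> = (\<Sum>l<m. C $$ (l,k) * B $$ (l,j) + B $$ (l,k) * C $$ (l,j))"
    using C B k by (simp add: sum.distrib)
  also have "\<dots> = om m (cv m C B k) (cv m C B j)"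
    unfolding om_def cv_def by (intro sum.cong refl) simp
  finally show ?thesis .
qed

lemma tupm_inj: "inj_on (\<lambda>(C,B). tupm m n C B) (carrier_mat m n \<times> carrier_mat m n)"
proof (rule inj_onI)
  fix x y assume x: "x \<in> carrier_mat m n \<times> carrier_mat m n" and y: "y \<in> carrier_mat m n \<times> carrier_mat m n"
    and e: "(\<lambda>(C,B). tupm m n C B) x = (\<lambda>(C,B). tupm m n C B) y"
  obtain C B where xCB: "x = (C,B)" by (cases x)
  obtain C' B' where yCB: "y = (C',B')" by (cases y)
  have e2: "tupm m n C B = tupm m n C' B'" using e xCB yCB by simp
  have CC: "C \<in> carrier_mat m n" "B \<in> carrier_mat m n" "C' \<in> carrier_mat m n" "B' \<in> carrier_mat m n"
    using x y xCB yCB by auto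
  have "C = C'"
  proof (rule eq_matI)
    fix i j assume "i < dim_row C'" "j < dim_col C'"
    then have ij: "i < m" "j < n" using CC by auto
    show "C $$ (i,j) = C' $$ (i,j)"
      using fun_cong[OF fun_cong[OF e2, of j], of i] ij unfolding tupm_def cv_def by simp
  qed (use CC in auto)
  moreover have "B = B'"
  proof (rule eq_matI)
    fix i j assume "i < dim_row B'" "j < dim_col B'"
    then have ij: "i < m" "j < n" using CC by auto
    show "B $$ (i,j) = B' $$ (i,j)"
      using fun_cong[OF fun_cong[OF e2, of j], of "m+i"] ij unfolding tupm_def cv_def by simp
  qed (use CC in auto)
  ultimately show "x = y" using xCB yCB by simp
qed

definition GoodM :: "nat \<Rightarrow> nat \<Rightarrow> nat set \<Rightarrow> (bit mat \<times> bit mat) set" where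
  "GoodM m n T = {(C,B). C \<in> carrier_mat m n \<and> B \<in> carrier_mat m n \<and> (\<forall>j\<in>T. \<forall>k<n. Mx C B $$ (k,j) = 0)}"

lemma card_GoodM:
  assumes T: "T \<subseteq> {0..<n}"
  shows "card (GoodM m n T) \<le> card (GoodTup m n T)"
proof -
  have sub: "(\<lambda>(C,B). tupm m n C B) ` GoodM m n T \<subseteq> GoodTup m n T"
  proof
    fix g assume "g \<in> (\<lambda>(C,B). tupm m n C B) ` GoodM m n T"
    then obtain C B where CB: "C \<in> carrier_mat m n" "B \<in> carrier_mat m n"
      "\<forall>j\<in>T. \<forall>k<n. Mx C B $$ (k,j) = 0" "g = tupm m n C B"
      unfolding GoodM_def by force
    have "g \<in> Tup m {0..<n}"
      unfolding Tup_def CB(4) tupm_def cv_def Vsp_iff by auto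
    moreover have "\<forall>j\<in>T. \<forall>k<n. om m (g k) (g j) = 0"
    proof (intro ballI allI impI)
      fix j k assume j: "j \<in> T" and k: "k < n"
      have jn: "j < n" using j T by auto
      have "om m (g k) (g j) = Mx C B $$ (k,j)"
        using Mx_entry[OF CB(1,2) k jn] k jn unfolding CB(4) tupm_def by simp
      then show "om m (g k) (g j) = 0" using CB(3) j k by simp
    qed
    ultimately show "g \<in> GoodTup m n T" unfolding GoodTup_def by blast
  qed
  have inj: "inj_on (\<lambda>(C,B). tupm m n C B) (GoodM m n T)"
    by (rule inj_on_subset[OF tupm_inj]) (auto simp: GoodM_def)
  have finG: "finite (GoodTup m n T)"
    unfolding GoodTup_def using finite_Tup[of "{0..<n}" m] by simp
  show ?thesis using card_inj_on_le[OF inj sub finG] .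
qed


definition Pm :: "nat \<Rightarrow> nat set \<Rightarrow> nat set \<Rightarrow> (nat \<times> nat \<Rightarrow> bit) \<Rightarrow> bit mat" where
  "Pm n S T a = mat n n (\<lambda>(i,j). (if i = j then 1 else 0) + (if i \<in> S \<and> j \<in> T then a (i,j) else 0))"

lemma Pm_carrier[simp]: "Pm n S T a \<in> carrier_mat n n"
  unfolding Pm_def by simp

lemma Pm_entry: "i < n \<Longrightarrow> j < n \<Longrightarrow> Pm n S T a $$ (i,j) = (if i = j then 1 else 0) + (if i \<in> S \<and> j \<in> T then a (i,j) else 0)"
  unfolding Pm_def by simp

lemma Pm_sq:
  assumes "S \<inter> T = {}"
  shows "Pm n S T a * Pm n S T a = 1\<^sub>m n"
proof (rule eq_matI)
  fix i j assume "i < dim_row (1\<^sub>m n :: bit mat)" "j < dim_col (1\<^sub>m n :: bit mat)"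
  then have ij: "i < n" "j < n" by auto
  let ?N = "\<lambda>i j. if i \<in> S \<and> j \<in> T then a (i,j) else (0::bit)"
  have "(Pm n S T a * Pm n S T a) $$ (i,j) = (\<Sum>l<n. Pm n S T a $$ (i,l) * Pm n S T a $$ (l,j))"
    by (rule mult_entry[OF Pm_carrier Pm_carrier ij])
  also have "\<dots> = (\<Sum>l<n. (if i = l then 1 else 0) * Pm n S T a $$ (l,j) + ?N i l * (if l = j then 1 else 0))"
  proof (intro sum.cong refl)
    fix l assume "l \<in> {..<n}"
    then have l: "l < n" by simp
    have NN: "?N i l * ?N l j = 0" using assms by auto
    show "Pm n S T a $$ (i,l) * Pm n S T a $$ (l,j) =
      (if i = l then 1 else 0) * Pm n S T a $$ (l,j) + ?N i l * (if l = j then 1 else 0)"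
      unfolding Pm_entry[OF ij(1) l] Pm_entry[OF l ij(2)] using NN
      by (simp add: distrib_right distrib_left)
  qed
  also have "\<dots> = (\<Sum>l<n. (if i = l then 1 else 0) * Pm n S T a $$ (l,j)) + (\<Sum>l<n. ?N i l * (if l = j then 1 else 0))"
    by (rule sum.distrib)
  also have "(\<Sum>l<n. (if i = l then 1 else 0) * Pm n S T a $$ (l,j)) = Pm n S T a $$ (i,j)"
    using ij by (simp add: if_distrib[of "\<lambda>y. y * _"] sum.delta cong: if_cong)
  also have "(\<Sum>l<n. ?N i l * (if l = j then 1 else 0)) = ?N i j"
    using ij by (simp add: if_distrib[of "\<lambda>y. _ * y"] sum.delta' cong: if_cong)
  finally show "(Pm n S T a * Pm n S T a) $$ (i,j) = 1\<^sub>m n $$ (i,j)"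
    using ij unfolding Pm_entry[OF ij] by (simp add: add.assoc)
qed (auto simp: Pm_def)

lemma MP_col:
  assumes M: "M \<in> carrier_mat n n" and S: "S \<subseteq> {0..<n}" and ST: "S \<inter> T = {}"
    and j: "j \<in> T" "j < n" and k: "k < n"
    and wit: "M $$ (k,j) = (\<Sum>i\<in>S. a (i,j) * M $$ (k,i))"
  shows "(M * Pm n S T a) $$ (k,j) = 0"
proof -
  have "(M * Pm n S T a) $$ (k,j) = (\<Sum>l<n. M $$ (k,l) * Pm n S T a $$ (l,j))"
    by (rule mult_entry[OF M Pm_carrier k j(2)])
  also have "\<dots> = (\<Sum>l<n. M $$ (k,l) * (if l = j then 1 else 0)) + (\<Sum>l<n. if l \<in> S then a (l,j) * M $$ (k,l) else 0)"
    unfolding sum.distrib[symmetric]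
    by (intro sum.cong refl) (use j in \<open>auto simp: Pm_entry distrib_left mult.commute\<close>)
  also have "(\<Sum>l<n. M $$ (k,l) * (if l = j then 1 else 0)) = M $$ (k,j)"
    using j by (simp add: if_distrib[of "\<lambda>y. _ * y"] sum.delta' cong: if_cong)
  also have "(\<Sum>l<n. if l \<in> S then a (l,j) * M $$ (k,l) else 0) = (\<Sum>l\<in>{l\<in>{..<n}. l \<in> S}. a (l,j) * M $$ (k,l))"
    by (rule sum.inter_filter[symmetric]) simp
  also have "{l\<in>{..<n}. l \<in> S} = S" using S by auto
  finally show ?thesis using wit by simp
qed

lemma Mx_P:
  assumes C: "C \<in> carrier_mat m n" and B: "B \<in> carrier_mat m n" and P: "P \<in> carrier_mat n n"
  shows "Mx (C * P) (B * P) = transpose_mat P * (Mx C B * P)"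
proof -
  have CT: "transpose_mat C \<in> carrier_mat n m" and BT: "transpose_mat B \<in> carrier_mat n m"
    and PT: "transpose_mat P \<in> carrier_mat n n" using C B P by auto
  have 1: "transpose_mat (C * P) * (B * P) = transpose_mat P * ((transpose_mat C * B) * P)"
  proof -
    have YP: "B * P \<in> carrier_mat m n" using B P by simp
    have "transpose_mat P * transpose_mat C * (B * P) = transpose_mat P * (transpose_mat C * (B * P))"
      by (rule assoc_mult_mat[OF PT CT YP])
    also have "transpose_mat C * (B * P) = transpose_mat C * B * P"
      by (rule assoc_mult_mat[OF CT B P, symmetric])
    finally show ?thesis unfolding transpose_mult[OF C P] .
  qed
  have 2: "transpose_mat (B * P) * (C * P) = transpose_mat P * ((transpose_mat B * C) * P)"
  proof -
    have YP: "C * P \<in> carrier_mat m n" using C P by simp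
    have "transpose_mat P * transpose_mat B * (C * P) = transpose_mat P * (transpose_mat B * (C * P))"
      by (rule assoc_mult_mat[OF PT BT YP])
    also have "transpose_mat B * (C * P) = transpose_mat B * C * P"
      by (rule assoc_mult_mat[OF BT C P, symmetric])
    finally show ?thesis unfolding transpose_mult[OF B P] .
  qed
  have CTB: "transpose_mat C * B \<in> carrier_mat n n" using mult_carrier_mat[OF CT B] .
  have BTC: "transpose_mat B * C \<in> carrier_mat n n" using mult_carrier_mat[OF BT C] .
  have c1: "transpose_mat C * B * P \<in> carrier_mat n n" using mult_carrier_mat[OF CTB P] .
  have c2: "transpose_mat B * C * P \<in> carrier_mat n n" using mult_carrier_mat[OF BTC P] .
  have eq1: "Mx C B * P = transpose_mat C * B * P + transpose_mat B * C * P"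
    unfolding Mx_def by (rule add_mult_distrib_mat[OF CTB BTC P])
  have R: "transpose_mat P * (Mx C B * P) = transpose_mat P * (transpose_mat C * B * P) + transpose_mat P * (transpose_mat B * C * P)"
    unfolding eq1 by (rule mult_add_distrib_mat[OF PT c1 c2])
  have L: "Mx (C * P) (B * P) = transpose_mat P * (transpose_mat C * B * P) + transpose_mat P * (transpose_mat B * C * P)"
    unfolding Mx_def 1 2 by (rule refl)
  show ?thesis unfolding L R by (rule refl)
qed


lemma rank_witness:
  fixes M :: "bit mat"
  assumes M: "M \<in> carrier_mat n n" and r: "rank2 n M + d \<le> n"
  shows "\<exists>S T a. S \<subseteq> {0..<n} \<and> T \<subseteq> {0..<n} \<and> S \<inter> T = {} \<and> card T = d \<and> card S + d \<le> n \<and>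
     (\<forall>j\<in>T. \<forall>k<n. M $$ (k,j) = (\<Sum>i\<in>S. a (i,j) * M $$ (k,i)))"
proof -
  interpret vec_space "TYPE(bit)" n .
  let ?P = "\<lambda>X. X \<subseteq> set (cols M) \<and> lin_indpt X"
  obtain U where U: "maximal U ?P"
    using maximal_exists[of ?P "card (set (cols M))" "{}"]
    by (meson List.finite_set card_mono empty_iff empty_subsetI finite_lin_indpt2 rev_finite_subset)
  have rk: "rank M = card U" by (rule rank_card_indpt[OF M U])
  have UC: "U \<subseteq> set (cols M)" and Uli: "lin_indpt U" using U unfolding maximal_def by auto
  have colsC: "set (cols M) \<subseteq> carrier_vec n" using cols_dim[of M] M by simp
  have UcV: "U \<subseteq> carrier_vec n" using UC colsC by (rule subset_trans)
  have finU: "finite U" using UC by (rule finite_subset) simp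
  have spanning: "set (cols M) \<subseteq> span U"
  proof
    fix s assume s: "s \<in> set (cols M)"
    show "s \<in> span U"
    proof (rule ccontr)
      assume ns: "s \<notin> span U"
      have sU: "s \<notin> U" using ns in_own_span[OF UcV] by blast
      have sV: "s \<in> carrier_vec n" using s colsC by blast
      have "\<not> lin_dep (U \<union> {s})" using lin_dep_iff_in_span[OF UcV Uli sV sU] ns by simp
      then have "?P (U \<union> {s})" using UC s by simp
      moreover have "U \<union> {s} \<supseteq> U" by blast
      ultimately have "U \<union> {s} = U" using U unfolding maximal_def by blast
      then show False using sU by blast
    qed
  qed
  define idx where "idx v = (SOME i. i < n \<and> col M i = v)" for v
  have idx: "idx v < n \<and> col M (idx v) = v" if v: "v \<in> U" for v
  proof -
    have "v \<in> set (cols M)" using v UC by blast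
    then obtain i where "i < length (cols M)" "cols M ! i = v" by (auto simp: in_set_conv_nth)
    then have "i < n \<and> col M i = v" using M by simp
    then show ?thesis unfolding idx_def by (rule someI)
  qed
  have inj: "inj_on idx U"
    by (rule inj_onI) (metis idx)
  define S where "S = idx ` U"
  have S: "S \<subseteq> {0..<n}" unfolding S_def using idx by auto
  have cS: "card S = rank M" unfolding S_def rk by (rule card_image[OF inj])
  have cS2: "card S + d \<le> n" using cS r unfolding rank2_def by simp
  have "d \<le> card ({0..<n} - S)" using cS2 S by (simp add: card_Diff_subset finite_subset)
  then obtain T where T: "T \<subseteq> {0..<n} - S" "card T = d" by (meson obtain_subset_with_card_n)
  have "\<forall>j\<in>T. \<exists>cA. col M j = lincomb (fst cA) (snd cA) \<and> finite (snd cA) \<and> snd cA \<subseteq> U"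
  proof
    fix j assume "j \<in> T"
    then have jn: "j < n" using T by auto
    then have "col M j \<in> set (cols M)" using M by (metis cols_length cols_nth carrier_matD(2) nth_mem)
    then have "col M j \<in> span U" using spanning by blast
    then obtain c A where "col M j = lincomb c A" "finite A" "A \<subseteq> U" using in_spanE by blast
    then show "\<exists>cA. col M j = lincomb (fst cA) (snd cA) \<and> finite (snd cA) \<and> snd cA \<subseteq> U"
      by (intro exI[of _ "(c,A)"]) simp
  qed
  then obtain g where g: "\<forall>j\<in>T. col M j = lincomb (fst (g j)) (snd (g j)) \<and> finite (snd (g j)) \<and> snd (g j) \<subseteq> U"
    by metis
  define a where "a = (\<lambda>(i,j). if col M i \<in> snd (g j) then fst (g j) (col M i) else 0)"
  have wit: "M $$ (k,j) = (\<Sum>i\<in>S. a (i,j) * M $$ (k,i))" if j: "j \<in> T" and k: "k < n" for j k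
  proof -
    define c where "c = fst (g j)"
    define A where "A = snd (g j)"
    have cA: "col M j = lincomb c A" "finite A" "A \<subseteq> U" using g j unfolding c_def A_def by auto
    have jn: "j < n" using j T by auto
    have AV: "A \<subseteq> carrier_vec n" using cA(3) UcV by blast
    have "M $$ (k,j) = col M j $ k" using M k jn by simp
    also have "\<dots> = (\<Sum>v\<in>A. c v * v $ k)" unfolding cA(1) by (rule lincomb_index[OF k AV])
    also have "\<dots> = (\<Sum>v\<in>U. if v \<in> A then c v * v $ k else 0)"
      using cA(3) finU by (simp add: sum.inter_filter[symmetric] Int_absorb1 inf_set_def[symmetric]) (metis (no_types, lifting) Collect_cong Int_def inf.absorb_iff2)
    also have "\<dots> = (\<Sum>v\<in>U. a (idx v, j) * M $$ (k, idx v))"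
    proof (intro sum.cong refl)
      fix v assume v: "v \<in> U"
      have "M $$ (k, idx v) = v $ k" using idx[OF v] M k by (metis carrier_matD(1) col_def index_vec)
      then show "(if v \<in> A then c v * v $ k else 0) = a (idx v, j) * M $$ (k, idx v)"
        unfolding a_def A_def c_def using idx[OF v] by simp
    qed
    also have "\<dots> = (\<Sum>i\<in>S. a (i,j) * M $$ (k,i))"
      unfolding S_def by (rule sum.reindex[OF inj, symmetric, unfolded comp_def])
    finally show ?thesis .
  qed
  show ?thesis
    using S T cS2 wit by (intro exI[of _ S] exI[of _ T] exI[of _ a]) auto
qed


lemma carrier_mat_bij:
  "bij_betw (\<lambda>A. restrict (\<lambda>ij. A $$ ij) ({0..<m}\<times>{0..<n})) (carrier_mat m n :: bit mat set)
     (PiE ({0..<m}\<times>{0..<n}) (\<lambda>_. UNIV :: bit set))"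
proof (rule bij_betw_byWitness[where f'="\<lambda>f. mat m n f"])
  show "\<forall>A\<in>carrier_mat m n. mat m n (restrict (\<lambda>ij. A $$ ij) ({0..<m}\<times>{0..<n})) = (A :: bit mat)"
  proof
    fix A :: "bit mat" assume A: "A \<in> carrier_mat m n"
    show "mat m n (restrict (\<lambda>ij. A $$ ij) ({0..<m}\<times>{0..<n})) = A"
      by (rule eq_matI) (use A in auto)
  qed
  show "\<forall>f\<in>PiE ({0..<m}\<times>{0..<n}) (\<lambda>_. UNIV :: bit set). restrict (\<lambda>ij. mat m n f $$ ij) ({0..<m}\<times>{0..<n}) = f"
  proof
    fix f :: "nat \<times> nat \<Rightarrow> bit" assume f: "f \<in> PiE ({0..<m}\<times>{0..<n}) (\<lambda>_. UNIV)"
    show "restrict (\<lambda>ij. mat m n f $$ ij) ({0..<m}\<times>{0..<n}) = f"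
    proof
      fix ij :: "nat \<times> nat"
      obtain i j where ij: "ij = (i,j)" by (cases ij)
      show "restrict (\<lambda>ij. mat m n f $$ ij) ({0..<m}\<times>{0..<n}) ij = f ij"
        using f unfolding ij by (cases "i < m \<and> j < n") (auto simp: PiE_def extensional_def)
    qed
  qed
qed (simp_all add: restrict_PiE_iff image_subset_iff)

lemma finite_carrier_mat_bit: "finite (carrier_mat m n :: bit mat set)"
  using bij_betw_finite[OF carrier_mat_bij] by (simp add: finite_PiE)

lemma card_carrier_mat_bit: "card (carrier_mat m n :: bit mat set) = 2 ^ (m * n)"
  using bij_betw_same_card[OF carrier_mat_bij]
  by (simp add: card_PiE card_bit_UNIV card_cartesian_product)

definition STs :: "nat \<Rightarrow> nat \<Rightarrow> (nat set \<times> nat set) set" where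
  "STs n d = {(S,T). S \<subseteq> {0..<n} \<and> T \<subseteq> {0..<n} \<and> S \<inter> T = {} \<and> card T = d \<and> card S + d \<le> n}"

definition Wit :: "nat \<Rightarrow> nat \<Rightarrow> ((nat set \<times> nat set) \<times> (nat \<times> nat \<Rightarrow> bit)) set" where
  "Wit n d = (SIGMA ST:STs n d. PiE (fst ST \<times> snd ST) (\<lambda>_. UNIV :: bit set))"

lemma STs_sub: "STs n d \<subseteq> Pow {0..<n} \<times> Pow {0..<n}"
  unfolding STs_def by auto

lemma finite_STs: "finite (STs n d)"
  using STs_sub by (rule finite_subset) simp

lemma finite_Wit: "finite (Wit n d)"
  unfolding Wit_def using finite_STs
  by (intro finite_SigmaI) (auto intro!: finite_PiE finite_cartesian_product simp: STs_def dest: finite_subset)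

lemma card_Wit: "real (card (Wit n d)) \<le> 2^n * 2^n * 2^((n-d)*d)"
proof -
  have c1: "card (PiE (fst ST \<times> snd ST) (\<lambda>_. UNIV :: bit set)) \<le> 2^((n-d)*d)" if ST: "ST \<in> STs n d" for ST
  proof -
    obtain S T where STe: "ST = (S,T)" by (cases ST)
    have props: "S \<subseteq> {0..<n}" "T \<subseteq> {0..<n}" "card T = d" "card S + d \<le> n"
      using ST unfolding STe STs_def by auto
    have fS: "finite S" using props(1) by (rule finite_subset) simp
    have fT: "finite T" using props(2) by (rule finite_subset) simp
    have "card (PiE (S \<times> T) (\<lambda>_. UNIV :: bit set)) = 2 ^ (card S * card T)"
      using fS fT by (simp add: card_PiE card_bit_UNIV card_cartesian_product)
    also have "\<dots> \<le> 2 ^ ((n-d)*d)"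
      using props by (intro power_increasing) auto
    finally show ?thesis unfolding STe by simp
  qed
  have "card (Wit n d) = (\<Sum>ST\<in>STs n d. card (PiE (fst ST \<times> snd ST) (\<lambda>_. UNIV :: bit set)))"
    unfolding Wit_def
    by (rule card_SigmaI[OF finite_STs])
       (auto intro!: finite_PiE finite_cartesian_product simp: STs_def dest: finite_subset)
  also have "\<dots> \<le> (\<Sum>ST\<in>STs n d. 2^((n-d)*d))" by (rule sum_mono) (rule c1)
  also have "\<dots> = card (STs n d) * 2^((n-d)*d)" by simp
  also have "\<dots> \<le> (2^n * 2^n) * 2^((n-d)*d)"
  proof -
    have "card (STs n d) \<le> card (Pow {0..<n} \<times> Pow {0..<(n::nat)})"
      by (rule card_mono[OF _ STs_sub]) simp
    also have "\<dots> = 2^n * 2^n" by (simp add: card_cartesian_product card_Pow)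
    finally show ?thesis by simp
  qed
  finally have "card (Wit n d) \<le> 2^n * 2^n * 2^((n-d)*d)" .
  then have "real (card (Wit n d)) \<le> real (2^n * 2^n * 2^((n-d)*d))" by (simp only: of_nat_le_iff)
  then show ?thesis by simp
qed

definition Gbound :: "nat \<Rightarrow> nat \<Rightarrow> nat \<Rightarrow> real" where
  "Gbound m n d = (2^(2*m) / 2^d)^(n-d) * 2 powr (real ((2*m+1) * d) - real d * (real d - 1) / 2)"

lemma GoodM_bound:
  assumes T: "T \<subseteq> {0..<n}" "card T = d" and c: "n + d \<le> 2*m"
  shows "real (card (GoodM m n T)) \<le> Gbound m n d"
proof -
  have finT: "finite T" using T(1) by (rule finite_subset) simp
  have dn: "d \<le> n" using T card_mono[OF _ T(1)] by fastforce
  have "real (card (GoodM m n T)) \<le> real (card (GoodTup m n T))"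
    using card_GoodM[OF T(1)] by simp
  also have "\<dots> \<le> (2^(2*m) / 2^card T)^(n - card T) * W m T (n - card T)"
    by (rule card_GoodTup[OF T(1)]) (use T(2) dn c in simp)
  also have "\<dots> \<le> (2^(2*m) / 2^card T)^(n - card T) * 2 powr (real ((2*m+1) * card T) - real (card T) * (real (card T) - 1) / 2)"
    by (rule mult_left_mono[OF W_bound[OF finT]]) (use T(2) dn c in simp_all)
  finally show ?thesis unfolding Gbound_def T(2) .
qed

definition Bad :: "nat \<Rightarrow> nat \<Rightarrow> nat \<Rightarrow> (bit mat \<times> bit mat) set" where
  "Bad m n d = {(C,B). C \<in> carrier_mat m n \<and> B \<in> carrier_mat m n \<and> rank2 n (Mx C B) + d \<le> n}"

definition PW :: "nat \<Rightarrow> ((nat set \<times> nat set) \<times> (nat \<times> nat \<Rightarrow> bit)) \<Rightarrow> bit mat" where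
  "PW n w = Pm n (fst (fst w)) (snd (fst w)) (snd w)"

lemma Bad_sub:
  "Bad m n d \<subseteq> (\<Union>w\<in>Wit n d. (\<lambda>(C,B). (C * PW n w, B * PW n w)) ` GoodM m n (snd (fst w)))"
proof
  fix x assume x: "x \<in> Bad m n d"
  obtain C B where xCB: "x = (C,B)" by (cases x)
  have C: "C \<in> carrier_mat m n" and B: "B \<in> carrier_mat m n" and r: "rank2 n (Mx C B) + d \<le> n"
    using x unfolding xCB Bad_def by auto
  define M where "M = Mx C B"
  have M: "M \<in> carrier_mat n n" unfolding M_def using Mx_carrier[OF C B] .
  obtain S T a where STa: "S \<subseteq> {0..<n}" "T \<subseteq> {0..<n}" "S \<inter> T = {}" "card T = d" "card S + d \<le> n"
    "\<forall>j\<in>T. \<forall>k<n. M $$ (k,j) = (\<Sum>i\<in>S. a (i,j) * M $$ (k,i))"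
    using rank_witness[OF M r[folded M_def]] by blast
  define a' where "a' = restrict a (S \<times> T)"
  define w where "w = ((S,T),a')"
  have wW: "w \<in> Wit n d" unfolding w_def Wit_def STs_def a'_def using STa by auto
  define P where "P = PW n w"
  have P: "P = Pm n S T a'" unfolding P_def PW_def w_def by simp
  have PC: "P \<in> carrier_mat n n" unfolding P by simp
  have wit': "M $$ (k,j) = (\<Sum>i\<in>S. a' (i,j) * M $$ (k,i))" if "j \<in> T" "k < n" for j k
    using STa(6) that unfolding a'_def by (auto intro!: sum.cong)
  have MP0: "(M * P) $$ (l,j) = 0" if "j \<in> T" "l < n" for j l
    unfolding P
    by (rule MP_col[OF M STa(1) STa(3) that(1) _ that(2) wit'[OF that]]) (use that STa(2) in auto)
  have CP: "C * P \<in> carrier_mat m n" and BP: "B * P \<in> carrier_mat m n" using C B PC by auto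
  have good: "(C * P, B * P) \<in> GoodM m n T"
  proof -
    have "Mx (C * P) (B * P) $$ (k,j) = 0" if j: "j \<in> T" and k: "k < n" for j k
    proof -
      have jn: "j < n" using j STa(2) by auto
      have MPC: "M * P \<in> carrier_mat n n" using M PC by simp
      have PTC: "transpose_mat P \<in> carrier_mat n n" using PC by simp
      have "Mx (C * P) (B * P) $$ (k,j) = (transpose_mat P * (M * P)) $$ (k,j)"
        unfolding Mx_P[OF C B PC] M_def ..
      also have "\<dots> = (\<Sum>l<n. transpose_mat P $$ (k,l) * (M * P) $$ (l,j))"
        by (rule mult_entry[OF PTC MPC k jn])
      also have "\<dots> = 0" using MP0[OF j] by simp
      finally show ?thesis .
    qed
    then show ?thesis unfolding GoodM_def using CP BP by blast
  qed
  have PP: "P * P = 1\<^sub>m n" unfolding P by (rule Pm_sq[OF STa(3)])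
  have "C * P * P = C" using C PC PP by (simp add: assoc_mult_mat[OF C PC PC])
  moreover have "B * P * P = B" using B PC PP by (simp add: assoc_mult_mat[OF B PC PC])
  ultimately have "x = (\<lambda>(C,B). (C * PW n w, B * PW n w)) (C * P, B * P)"
    unfolding xCB P_def by simp
  moreover have "snd (fst w) = T" unfolding w_def by simp
  ultimately show "x \<in> (\<Union>w\<in>Wit n d. (\<lambda>(C,B). (C * PW n w, B * PW n w)) ` GoodM m n (snd (fst w)))"
    using wW good by blast
qed

lemma main_count:
  assumes "n + d \<le> 2*m"
  shows "real (card (Bad m n d)) \<le> 2^n * 2^n * 2^((n-d)*d) * Gbound m n d"
proof -
  let ?U = "(\<Union>w\<in>Wit n d. (\<lambda>(C,B). (C * PW n w, B * PW n w)) ` GoodM m n (snd (fst w)))"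
  have finG: "finite (GoodM m n T)" for T
  proof -
    have "GoodM m n T \<subseteq> carrier_mat m n \<times> carrier_mat m n" unfolding GoodM_def by auto
    moreover have "finite (carrier_mat m n \<times> carrier_mat m n :: (bit mat \<times> bit mat) set)"
      by (intro finite_cartesian_product finite_carrier_mat_bit)
    ultimately show ?thesis by (rule finite_subset)
  qed
  have "card (Bad m n d) \<le> card ?U"
    by (rule card_mono[OF _ Bad_sub]) (simp add: finite_Wit finG)
  also have "\<dots> \<le> (\<Sum>w\<in>Wit n d. card ((\<lambda>(C,B). (C * PW n w, B * PW n w)) ` GoodM m n (snd (fst w))))"
    by (rule card_UN_le[OF finite_Wit])
  also have "\<dots> \<le> (\<Sum>w\<in>Wit n d. card (GoodM m n (snd (fst w))))"
    by (rule sum_mono) (rule card_image_le[OF finG])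
  finally have A0: "card (Bad m n d) \<le> (\<Sum>w\<in>Wit n d. card (GoodM m n (snd (fst w))))" .
  then have "real (card (Bad m n d)) \<le> real (\<Sum>w\<in>Wit n d. card (GoodM m n (snd (fst w))))"
    by (simp only: of_nat_le_iff)
  then have A: "real (card (Bad m n d)) \<le> (\<Sum>w\<in>Wit n d. real (card (GoodM m n (snd (fst w)))))"
    by simp
  also have "\<dots> \<le> (\<Sum>w\<in>Wit n d. Gbound m n d)"
  proof (rule sum_mono)
    fix w assume w: "w \<in> Wit n d"
    then have "snd (fst w) \<subseteq> {0..<n}" "card (snd (fst w)) = d"
      unfolding Wit_def STs_def by auto
    then show "real (card (GoodM m n (snd (fst w)))) \<le> Gbound m n d"
      by (rule GoodM_bound) (rule assms)
  qed
  also have "\<dots> = real (card (Wit n d)) * Gbound m n d" by simp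
  also have "\<dots> \<le> 2^n * 2^n * 2^((n-d)*d) * Gbound m n d"
    by (rule mult_right_mono[OF card_Wit]) (simp add: Gbound_def)
  finally show ?thesis .
qed


lemma two_pow_powr: "(2::real) ^ k = 2 powr real k"
  by (simp add: powr_realpow)

lemma bound_eq:
  assumes dn: "d \<le> n"
  shows "2^n * 2^n * 2^((n-d)*d) * Gbound m n d / (real (2^(m*n)))^2
       = 2 powr (2 * real n + 3/2 * real d - real d ^ 2 / 2)"
proof -
  have q: "(2^(2*m) / 2^d :: real)^(n-d) = 2 powr (real (n-d) * (real (2*m) - real d))"
  proof -
    have "(2::real)^(2*m) / 2^d = 2 powr (real (2*m) - real d)"
      by (simp only: powr_diff two_pow_powr)
    then show ?thesis by (simp only:) (rule powr_power, simp)
  qed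
  have r: "(real (2^(m*n)))^2 = 2 powr (real 2 * real (m*n))"
    unfolding of_nat_power of_nat_numeral two_pow_powr by (subst powr_power) simp_all
  have "2^n * 2^n * 2^((n-d)*d) * Gbound m n d / (real (2^(m*n)))^2
      = 2 powr (real n + real n + real ((n-d)*d) + real (n-d) * (real (2*m) - real d)
          + (real ((2*m+1) * d) - real d * (real d - 1) / 2) - real 2 * real (m*n))"
    unfolding Gbound_def q r unfolding two_pow_powr powr_diff powr_add by simp
  also have "real n + real n + real ((n-d)*d) + real (n-d) * (real (2*m) - real d)
          + (real ((2*m+1) * d) - real d * (real d - 1) / 2) - real 2 * real (m*n)
        = 2 * real n + 3/2 * real d - real d ^ 2 / 2"
    using dn by (simp add: of_nat_diff field_simps power2_eq_square)
  finally show ?thesis .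
qed


theorem lemmaD7:
  fixes \<epsilon> \<alpha> :: real
  assumes "\<epsilon> > 0" and "1/2 < \<alpha>" and "\<alpha> < 1"
  shows "\<exists>\<delta>>0. \<exists>N. \<forall>n\<ge>N. \<forall>m. \<alpha> * real n \<le> real m \<and> m \<le> n \<longrightarrow>
           prob_low_rank m n ((1 - \<epsilon>) * real n) \<le> 2 powr (- \<delta> * real n ^ 2)"
proof -
  define e where "e = min \<epsilon> ((2*\<alpha> - 1)/2)"
  have e0: "e > 0" using assms unfolding e_def by simp
  have e_eps: "e \<le> \<epsilon>" unfolding e_def by (rule min.cobounded1)
  have e_al: "e \<le> (2*\<alpha> - 1)/2" unfolding e_def by (rule min.cobounded2)
  have "(2*\<alpha> - 1)/2 \<le> 1/2" using assms(3) by (simp add: field_simps)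
  then have e12: "e \<le> 1/2" using e_al by (rule order_trans[rotated])
  define \<delta> where "\<delta> = e^2/4"
  have d0: "\<delta> > 0" unfolding \<delta>_def using e0 by simp
  define N where "N = nat \<lceil>max (2/(2*\<alpha>-1)) (14/e^2)\<rceil> + 2"
  have main: "\<forall>n\<ge>N. \<forall>m. \<alpha> * real n \<le> real m \<and> m \<le> n \<longrightarrow>
           prob_low_rank m n ((1 - \<epsilon>) * real n) \<le> 2 powr (- \<delta> * real n ^ 2)"
  proof (intro allI impI)
    fix n m assume nN: "N \<le> n" and mm: "\<alpha> * real n \<le> real m \<and> m \<le> n"
    have NN: "max (2/(2*\<alpha>-1)) (14/e^2) \<le> real (nat \<lceil>max (2/(2*\<alpha>-1)) (14/e^2)\<rceil>)"
      by (rule real_nat_ceiling_ge)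
    have nN': "real (nat \<lceil>max (2/(2*\<alpha>-1)) (14/e^2)\<rceil>) + 2 \<le> real n"
      using nN unfolding N_def by linarith
    have n2: "real n \<ge> 2" using nN' by simp
    have nA: "2/(2*\<alpha>-1) \<le> real n" using NN nN' by linarith
    have nB: "14/e^2 \<le> real n" using NN nN' by linarith
    have al0: "2*\<alpha> - 1 > 0" using assms by simp
    have nA': "2 \<le> (2*\<alpha>-1) * real n" using nA al0 by (simp add: field_simps)
    have nB': "14 \<le> e^2 * real n" using nB e0 by (simp add: field_simps)
    define d where "d = nat \<lceil>e * real n\<rceil>"
    have en0: "0 \<le> e * real n" using e0 by simp
    have d1: "e * real n \<le> real d" unfolding d_def by (rule real_nat_ceiling_ge)
    have d2: "real d \<le> e * real n + 1"
    proof -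
      have "real_of_int \<lceil>e * real n\<rceil> < e * real n + 1" using ceiling_correct[of "e * real n"] by linarith
      moreover have "real d = real_of_int \<lceil>e * real n\<rceil>" unfolding d_def using en0 by simp
      ultimately show ?thesis by simp
    qed
    have en1: "e * real n \<le> real n / 2" using e12 n2 by (simp add: mult_right_mono[of e "1/2" "real n", simplified])
    have en2: "e * real n \<le> (2*\<alpha>-1)/2 * real n" using e_al by (intro mult_right_mono) auto
    have "real d \<le> real n" using d2 en1 n2 by linarith
    then have dn: "d \<le> n" by simp
    have c: "n + d \<le> 2*m"
    proof -
      have "(2*\<alpha>-1)/2 * real n = \<alpha> * real n - real n / 2" by (simp add: field_simps)
      then have "real n + real d \<le> 2 * real m" using d2 en2 nA' mm by linarith
      then have "real (n + d) \<le> real (2 * m)" by simp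
      then show ?thesis by (simp only: of_nat_le_iff)
    qed
    let ?X = "{(C, B). C \<in> carrier_mat m n \<and> B \<in> carrier_mat m n \<and>
                 real (rank2 n (transpose_mat C * B + transpose_mat B * C)) \<le> (1 - \<epsilon>) * real n}"
    have sub: "?X \<subseteq> Bad m n d"
    proof
      fix x assume "x \<in> ?X"
      then obtain C B where x: "x = (C,B)" "C \<in> carrier_mat m n" "B \<in> carrier_mat m n"
        "real (rank2 n (Mx C B)) \<le> (1 - \<epsilon>) * real n" unfolding Mx_def by blast
      define r where "r = rank2 n (Mx C B)"
      have "e * real n \<le> \<epsilon> * real n" using e_eps by (intro mult_right_mono) auto
      then have er: "e * real n \<le> real n - real r" using x(4) unfolding r_def by (simp add: algebra_simps)
      then have "\<lceil>e * real n\<rceil> \<le> int n - int r" by (simp add: ceiling_le_iff)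
      moreover have "int d = \<lceil>e * real n\<rceil>" unfolding d_def using en0 by simp
      ultimately have "int r + int d \<le> int n" by linarith
      then have "r + d \<le> n" by (simp only: of_nat_add[symmetric] of_nat_le_iff)
      then show "x \<in> Bad m n d" unfolding Bad_def r_def using x by simp
    qed
    have finB: "finite (Bad m n d)"
    proof -
      have "Bad m n d \<subseteq> carrier_mat m n \<times> carrier_mat m n" unfolding Bad_def by auto
      moreover have "finite (carrier_mat m n \<times> carrier_mat m n :: (bit mat \<times> bit mat) set)"
        by (intro finite_cartesian_product finite_carrier_mat_bit)
      ultimately show ?thesis by (rule finite_subset)
    qed
    have cX: "real (card ?X) \<le> real (card (Bad m n d))"
      using card_mono[OF finB sub] by simp
    have den: "real (card (carrier_mat m n :: bit mat set)) ^ 2 = (real (2^(m*n)))^2"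
      by (simp only: card_carrier_mat_bit)
    have "prob_low_rank m n ((1 - \<epsilon>) * real n) = real (card ?X) / (real (2^(m*n)))^2"
      unfolding prob_low_rank_def den ..
    also have "\<dots> \<le> real (card (Bad m n d)) / (real (2^(m*n)))^2"
      by (rule divide_right_mono[OF cX]) simp
    also have "\<dots> \<le> 2^n * 2^n * 2^((n-d)*d) * Gbound m n d / (real (2^(m*n)))^2"
      by (rule divide_right_mono[OF main_count[OF c]]) simp
    also have "\<dots> = 2 powr (2 * real n + 3/2 * real d - real d ^ 2 / 2)"
      by (rule bound_eq[OF dn])
    also have "\<dots> \<le> 2 powr (- \<delta> * real n ^ 2)"
    proof -
      have h2: "(e * real n)^2 \<le> real d ^ 2" by (rule power_mono[OF d1 en0])
      have h3: "14 * real n \<le> e^2 * real n * real n" using nB' n2 by (intro mult_right_mono) auto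
      have dnr: "real d \<le> real n" using dn by simp
      have "2 * real n + 3/2 * real d - real d ^ 2 / 2 \<le> - \<delta> * real n ^ 2"
        using h2 h3 dnr unfolding \<delta>_def by (simp add: power2_eq_square power_mult_distrib algebra_simps)
      then show ?thesis by simp
    qed
    finally show "prob_low_rank m n ((1 - \<epsilon>) * real n) \<le> 2 powr (- \<delta> * real n ^ 2)" .
  qed
  show ?thesis using d0 main by blast
qed

end
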